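(* Let $k\le l$ be positive integers with $\gcd(k,l)=1$, let $n\ge1$, $m\ge 0$ be integers, write $m=qn+r$ with integers $q\ge 0$, $0\le r<n$, and let $A=(a_{ij})\in\mathcal D^{k,l}(m,n)$. Let $I$ be a set of rows and $J$ a set of columns of $A$ such that $a_{ij}\le q$ for all $i\in I$, $j\in J$, and such that $|I|+|J|$ is as large as possible among all such pairs. Put $t_1=nk-|I|$ and $t_2=nl-|J|$. Then $$qt_1t_2+r(t_1l+t_2k)\ge klnr.$$
   Context: $\mathcal D^{k,l}(m,n)$ denotes the set of all $nk\times nl$ matrices with nonnegative integer entries all of whose row sums equal $ml$ and all of whose column sums equal $mk$. *)

theory Defs
  imports Main
begin

text \<open>A matrix is represented as a function A :: nat => nat => nat, of which only the
  entries A i j with i < n*k, j < n*l are relevant.\<close>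
definition in_D :: "nat \<Rightarrow> nat \<Rightarrow> nat \<Rightarrow> nat \<Rightarrow> (nat \<Rightarrow> nat \<Rightarrow> nat) \<Rightarrow> bool" where
  "in_D k l m n A \<longleftrightarrow>
     (\<forall>i < n*k. (\<Sum>j<n*l. A i j) = m*l) \<and>
     (\<forall>j < n*l. (\<Sum>i<n*k. A i j) = m*k)"

end

theory Submission
  imports Defs
begin

theorem lemma2p3:
  fixes k l n m :: nat and A :: "nat \<Rightarrow> nat \<Rightarrow> nat" and I J :: "nat set"
  assumes "0 < k" and "k \<le> l" and "gcd k l = 1"
    and "1 \<le> n"
    and "in_D k l m n A"
    and "I \<subseteq> {..<n*k}" and "J \<subseteq> {..<n*l}"
    and "\<forall>i\<in>I. \<forall>j\<in>J. A i j \<le> m div n"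
    and "\<forall>I' J'. I' \<subseteq> {..<n*k} \<and> J' \<subseteq> {..<n*l} \<and>
                 (\<forall>i\<in>I'. \<forall>j\<in>J'. A i j \<le> m div n)
                 \<longrightarrow> card I' + card J' \<le> card I + card J"
  shows "let q = m div n; r = m mod n; t1 = n*k - card I; t2 = n*l - card J
         in q*t1*t2 + r*(t1*l + t2*k) \<ge> k*l*n*r"
proof -
  define q where "q = m div n"
  define r where "r = m mod n"
  define R where "R = {..<n*k}"
  define C where "C = {..<n*l}"
  have rows: "\<And>i. i \<in> R \<Longrightarrow> (\<Sum>j\<in>C. A i j) = m*l"
    using assms(5) unfolding in_D_def R_def C_def by auto
  have cols: "\<And>j. j \<in> C \<Longrightarrow> (\<Sum>i\<in>R. A i j) = m*k"
    using assms(5) unfolding in_D_def R_def C_def by auto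
  have fR: "finite R" and fC: "finite C" by (auto simp: R_def C_def)
  have IR: "I \<subseteq> R" and JC: "J \<subseteq> C" using assms(6,7) by (auto simp: R_def C_def)
  have fI: "finite I" and fJ: "finite J" using IR JC fR fC finite_subset by auto
  have cR: "card R = n*k" and cC: "card C = n*l" by (auto simp: R_def C_def)
  have cI: "card I \<le> n*k" and cJ: "card J \<le> n*l"
    using card_mono[OF fR IR] card_mono[OF fC JC] cR cC by auto
  have T: "(\<Sum>i\<in>R. \<Sum>j\<in>C. A i j) = n*k*(m*l)"
    using rows cR by simp
  have s1: "(\<Sum>i\<in>R. \<Sum>j\<in>C. A i j) = (\<Sum>i\<in>I. \<Sum>j\<in>C. A i j) + (\<Sum>i\<in>R-I. \<Sum>j\<in>C. A i j)"
    using sum.subset_diff[OF IR fR] by (simp add: add.commute)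
  have s2: "(\<Sum>i\<in>R-I. \<Sum>j\<in>C. A i j) = card (R-I) * (m*l)"
    using rows by simp
  have s3: "(\<Sum>i\<in>I. \<Sum>j\<in>C. A i j) = (\<Sum>i\<in>I. \<Sum>j\<in>J. A i j) + (\<Sum>i\<in>I. \<Sum>j\<in>C-J. A i j)"
  proof -
    have h: "(\<Sum>j\<in>C. A i j) = (\<Sum>j\<in>J. A i j) + (\<Sum>j\<in>C-J. A i j)" for i
    proof -
      have "sum (A i) C = sum (A i) (C-J) + sum (A i) J" by (rule sum.subset_diff[OF JC fC])
      thus ?thesis by linarith
    qed
    have "(\<Sum>i\<in>I. \<Sum>j\<in>C. A i j) = (\<Sum>i\<in>I. (\<Sum>j\<in>J. A i j) + (\<Sum>j\<in>C-J. A i j))"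
      by (rule sum.cong[OF refl h])
    thus ?thesis by (simp only: sum.distrib)
  qed
  have s4: "(\<Sum>i\<in>I. \<Sum>j\<in>J. A i j) \<le> card I * (card J * q)"
  proof -
    have "(\<Sum>i\<in>I. \<Sum>j\<in>J. A i j) \<le> (\<Sum>i\<in>I. \<Sum>j\<in>J. q)"
      using assms(8) unfolding q_def by (intro sum_mono) auto
    thus ?thesis by simp
  qed
  have s5: "(\<Sum>i\<in>I. \<Sum>j\<in>C-J. A i j) \<le> (\<Sum>i\<in>R. \<Sum>j\<in>C-J. A i j)"
    by (rule sum_mono2[OF fR IR]) auto
  have s6: "(\<Sum>i\<in>R. \<Sum>j\<in>C-J. A i j) = card (C-J) * (m*k)"
  proof -
    have "(\<Sum>i\<in>R. \<Sum>j\<in>C-J. A i j) = (\<Sum>j\<in>C-J. \<Sum>i\<in>R. A i j)"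
      by (rule sum.swap)
    also have "\<dots> = (\<Sum>j\<in>C-J. m*k)" using cols by (intro sum.cong) auto
    finally show ?thesis by simp
  qed
  have main: "n*k*(m*l) \<le> card I * (card J * q) + card (R-I) * (m*l) + card (C-J) * (m*k)"
    using T s1 s2 s3 s4 s5 s6 by linarith
  have cRI: "card (R-I) = n*k - card I" using card_Diff_subset[OF fI IR] cR by simp
  have cCJ: "card (C-J) = n*l - card J" using card_Diff_subset[OF fJ JC] cC by simp
  define t1 where "t1 = n*k - card I"
  define t2 where "t2 = n*l - card J"
  have e1: "int (card I) = int n * int k - int t1" using cI t1_def by simp
  have e2: "int (card J) = int n * int l - int t2" using cJ t2_def by simp
  have em0: "m = q * n + r" unfolding q_def r_def by simp
  have em: "int m = int q * int n + int r" using arg_cong[OF em0, of int] by simp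
  have mi: "int n*int k*(int m*int l) \<le> int (card I) * (int (card J) * int q) + int t1 * (int m*int l) + int t2 * (int m*int k)"
  proof -
    have main': "n*k*(m*l) \<le> card I * (card J * q) + t1*(m*l) + t2*(m*k)"
      using main cRI cCJ unfolding t1_def t2_def by simp
    have "int (n*k*(m*l)) \<le> int (card I * (card J * q) + t1*(m*l) + t2*(m*k))"
      using main' by (rule of_nat_mono)
    thus ?thesis by simp
  qed
  have iden: "(int q*int t1*int t2 + int r*(int t1*int l + int t2*int k)) - int k*int l*int n*int r
      = (int (card I) * (int (card J) * int q) + int t1 * (int m*int l) + int t2 * (int m*int k)) - int n*int k*(int m*int l)"
    unfolding e1 e2 em by (simp add: algebra_simps)
  have "int (k*l*n*r) \<le> int (q*t1*t2 + r*(t1*l + t2*k))"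
    using mi iden by simp
  hence "k*l*n*r \<le> q*t1*t2 + r*(t1*l + t2*k)" by linarith
  thus ?thesis unfolding Let_def q_def r_def t1_def t2_def by simp
qed

end
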